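(* Assume $\xi_p\in F$, let $m\ge1$, and suppose $K/F$ is cyclotomic, i.e. $K=F(\mu_{p^k})$ for some $k\ge1$; if $p=2$ assume moreover $\omega>1$. Let $d\in\mathbb Z$ satisfy $d\equiv\chi(\sigma)\pmod{p^{\min\{m,\nu\}}}$, where $\chi$ is the cyclotomic character of $K/F$. Then $((-\infty,\dots,-\infty),d)$ is a minimal norm pair of length $m$.
   Context: Let $p$ be a prime, $n\ge1$, and $K/F$ a cyclic Galois extension of degree $p^n$ with $\mathrm{char}(K)\neq p$; $G=\mathrm{Gal}(K/F)=\langle\sigma\rangle$. For $0\le i\le n$ let $K_i$ be the intermediate field with $[K_i:F]=p^i$. For $k\ge1$, $\mu_{p^k}$ is the group of $p^k$-th roots of unity. $\omega$ (resp. $\nu$) is $\infty$ if $F$ (resp. $K$) contains $\mu_{p^k}$ for all $k$, and otherwise the largest $k$ with $\mu_{p^k}\subseteq F$ (resp. $\subseteq K$). $U_i=1+p^i\mathbb Z$, $v_p$ the $p$-adic valuation. $\chi(\sigma)\in(\mathbb Z/p^\nu\mathbb Z)^\times$ is defined by $\sigma(\zeta)=\zeta^{\chi(\sigma)}$ for $\zeta\in\mu_{p^\nu}$. Norm pair: for $m\ge1$, a pair $(\mathbf a,d)$ with $\mathbf a=(a_0,\dots,a_{m-1})\in\{-\infty,0,1,\dots,n\}^m$, $a_0<n$, and $d\in U_1$ is a norm pair of length $m$ if there exist $\alpha,\delta_m\in K^\times$ and $\delta_i\in K_{a_i}^\times$ for $0\le i<m$ (with $\delta_i=1$ when $a_i=-\infty$)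 such that $\sigma(\alpha)=\alpha^d\delta_0\delta_1^p\cdots\delta_m^{p^m}$ and $\xi_p=N_{K/F}(\alpha)^{(d-1)/p}\,N_{K_{n-1}/F}(\delta_0)\prod_{i=1}^m N_{K/F}(\delta_i)^{p^{i-1}}$ for a fixed primitive $p$-th root of unity $\xi_p$. Order: $(\mathbf a,d)\le(\mathbf a',d')$ if $\mathbf a<\mathbf a'$ lexicographically ($-\infty$ smallest), or $\mathbf a=\mathbf a'$ and $\min\{v_p(d'-1),m\}\le\min\{v_p(d-1),m\}$. A norm pair of length $m$ is minimal if it is $\le$ every norm pair of length $m$. *)

theory Defs
  imports Main "HOL-Computational_Algebra.Primes" "HOL-Library.Extended_Nat"
begin

text \<open>Setting: K is the type 'k (a field), sigma a field automorphism of K of order p^n,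
  F the fixed field of sigma (so K/F is cyclic Galois of degree p^n with group generated
  by sigma, by Artin's theorem).\<close>

definition field_aut :: "('k::field \<Rightarrow> 'k) \<Rightarrow> bool" where
  "field_aut s \<longleftrightarrow> bij s \<and> (\<forall>x y. s (x + y) = s x + s y) \<and> (\<forall>x y. s (x * y) = s x * s y)
      \<and> s 1 = 1"

definition cyclic_gen :: "('k::field \<Rightarrow> 'k) \<Rightarrow> nat \<Rightarrow> nat \<Rightarrow> bool" where
  "cyclic_gen s p n \<longleftrightarrow> field_aut s \<and> (s ^^ (p ^ n) = id) \<and> (s ^^ (p ^ (n - 1)) \<noteq> id)"

text \<open>Fixed field of sigma^(p^i): the intermediate field K_i with [K_i:F] = p^i.
  K_0 = F, K_n = K.\<close>
definition Kfix :: "('k::field \<Rightarrow> 'k) \<Rightarrow> nat \<Rightarrow> nat \<Rightarrow> 'k set" where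
  "Kfix s p i = {x. (s ^^ (p ^ i)) x = x}"

definition baseF :: "('k::field \<Rightarrow> 'k) \<Rightarrow> 'k set" where
  "baseF s = {x. s x = x}"

text \<open>Norm from K_j to F: product over the conjugates sigma^l, l < p^j.\<close>
definition normj :: "('k::field \<Rightarrow> 'k) \<Rightarrow> nat \<Rightarrow> nat \<Rightarrow> 'k \<Rightarrow> 'k" where
  "normj s p j x = (\<Prod>l<p ^ j. (s ^^ l) x)"

definition subfield_set :: "'k::field set \<Rightarrow> bool" where
  "subfield_set S \<longleftrightarrow> 0 \<in> S \<and> 1 \<in> S \<and> (\<forall>x\<in>S. \<forall>y\<in>S. x + y \<in> S \<and> x * y \<in> S)
     \<and> (\<forall>x\<in>S. - x \<in> S \<and> inverse x \<in> S)"

definition contains_mu :: "'k::field set \<Rightarrow> nat \<Rightarrow> nat \<Rightarrow> bool" where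
  "contains_mu A p k \<longleftrightarrow> (\<exists>z\<in>A. z ^ (p ^ k) = 1 \<and> z ^ (p ^ (k - 1)) \<noteq> 1)"

definition mu_level :: "'k::field set \<Rightarrow> nat \<Rightarrow> enat" where
  "mu_level A p = (if \<forall>k\<ge>1. contains_mu A p k then \<infinity>
       else enat (GREATEST k. k = 0 \<or> contains_mu A p k))"

definition cyclotomic :: "('k::field \<Rightarrow> 'k) \<Rightarrow> nat \<Rightarrow> bool" where
  "cyclotomic s p \<longleftrightarrow> (\<exists>k\<ge>1. contains_mu (UNIV::'k set) p k \<and>
      (\<forall>S. subfield_set S \<and> baseF s \<subseteq> S \<and> {z. z ^ (p ^ k) = 1} \<subseteq> S \<longrightarrow> S = UNIV))"

text \<open>d is congruent to chi(sigma) modulo p^j (j <= nu): sigma acts on mu_{p^j} by zeta -> zeta^d.\<close>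
definition chi_cong :: "('k::field \<Rightarrow> 'k) \<Rightarrow> nat \<Rightarrow> int \<Rightarrow> nat \<Rightarrow> bool" where
  "chi_cong s p d j \<longleftrightarrow> (\<forall>z::'k. z ^ (p ^ j) = 1 \<longrightarrow> s z = z powi d)"

text \<open>Exponent vectors: entries None = -infinity, Some t = t.\<close>
fun opt_less :: "nat option \<Rightarrow> nat option \<Rightarrow> bool" where
  "opt_less None (Some _) = True"
| "opt_less (Some a) (Some b) = (a < b)"
| "opt_less _ None = False"

definition lex_less :: "nat option list \<Rightarrow> nat option list \<Rightarrow> bool" where
  "lex_less xs ys \<longleftrightarrow> (\<exists>i < min (length xs) (length ys).
       take i xs = take i ys \<and> opt_less (xs ! i) (ys ! i))"

text \<open>min{v_p(x), m}, with v_p(0) = infinity.\<close>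
definition vmin :: "nat \<Rightarrow> nat \<Rightarrow> int \<Rightarrow> nat" where
  "vmin p m x = (if x = 0 then m else min (multiplicity (int p) x) m)"

definition norm_pair ::
  "('k::field \<Rightarrow> 'k) \<Rightarrow> nat \<Rightarrow> nat \<Rightarrow> 'k \<Rightarrow> nat \<Rightarrow> nat option list \<Rightarrow> int \<Rightarrow> bool" where
  "norm_pair s p n xi m a d \<longleftrightarrow>
     m \<ge> 1 \<and> length a = m \<and>
     (\<forall>i<m. case a ! i of None \<Rightarrow> True | Some t \<Rightarrow> t \<le> n) \<and>
     (case a ! 0 of None \<Rightarrow> True | Some t \<Rightarrow> t < n) \<and>
     (int p dvd d - 1) \<and>
     (\<exists>(\<alpha>::'k) (\<delta>::nat \<Rightarrow> 'k).
        \<alpha> \<noteq> 0 \<and> (\<forall>i\<le>m. \<delta> i \<noteq> 0) \<and>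
        (\<forall>i<m. case a ! i of None \<Rightarrow> \<delta> i = 1 | Some t \<Rightarrow> \<delta> i \<in> Kfix s p t) \<and>
        s \<alpha> = \<alpha> powi d * (\<Prod>i\<le>m. \<delta> i ^ (p ^ i)) \<and>
        xi = (normj s p n \<alpha>) powi ((d - 1) div int p) * normj s p (n - 1) (\<delta> 0)
              * (\<Prod>i\<in>{1..m}. normj s p n (\<delta> i) ^ (p ^ (i - 1))))"

definition np_le :: "nat \<Rightarrow> nat \<Rightarrow> nat option list \<Rightarrow> int \<Rightarrow> nat option list \<Rightarrow> int \<Rightarrow> bool" where
  "np_le p m a d a' d' \<longleftrightarrow> lex_less a a' \<or> (a = a' \<and> vmin p m (d' - 1) \<le> vmin p m (d - 1))"

definition minimal_norm_pair ::
  "('k::field \<Rightarrow> 'k) \<Rightarrow> nat \<Rightarrow> nat \<Rightarrow> 'k \<Rightarrow> nat \<Rightarrow> nat option list \<Rightarrow> int \<Rightarrow> bool" where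
  "minimal_norm_pair s p n xi m a d \<longleftrightarrow> norm_pair s p n xi m a d \<and>
     (\<forall>a' d'. norm_pair s p n xi m a' d' \<longrightarrow> np_le p m a d a' d')"

end

theory Submission
  imports Defs "HOL-Computational_Algebra.Polynomial"
begin


lemma roots_card:
  fixes N :: nat assumes "N \<ge> 1"
  shows "finite {x::'k::field. x ^ N = 1} \<and> card {x::'k::field. x ^ N = 1} \<le> N"
proof -
  define q :: "'k poly" where "q = monom 1 N - 1"
  have c: "coeff q N = 1" using assms by (simp add: q_def coeff_monom)
  hence q0: "q \<noteq> 0" by auto
  have dq: "degree q \<le> N" unfolding q_def
    by (rule order.trans[OF degree_diff_le_max]) (simp add: degree_monom_le)
  have eq: "{x::'k. x ^ N = 1} = {x. poly q x = 0}" by (auto simp: q_def poly_monom)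
  show ?thesis unfolding eq using poly_roots_finite[OF q0] card_poly_roots_bound[OF q0] dq by auto
qed

lemma root_is_power:
  fixes w z :: "'k::field" and N :: nat
  assumes N: "N \<ge> 1" and w: "w ^ N = 1" and prim: "\<And>i. 0 < i \<Longrightarrow> i < N \<Longrightarrow> w ^ i \<noteq> 1"
    and z: "z ^ N = 1"
  shows "\<exists>i<N. z = w ^ i"
proof -
  have w0: "w \<noteq> 0" using w N by (cases N) auto
  have inj: "inj_on (\<lambda>i. w ^ i) {..<N}"
  proof (rule inj_onI)
    fix i j assume i: "i \<in> {..<N}" and j: "j \<in> {..<N}" and e: "w ^ i = w ^ j"
    show "i = j"
    proof (rule ccontr)
      assume "i \<noteq> j"
      then consider "i < j" | "j < i" by linarith
      then show False
      proof cases
        case 1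
        have "w ^ j = w ^ i * w ^ (j - i)" using 1 by (simp add: power_add[symmetric])
        hence "w ^ (j - i) = 1" using e w0 by simp
        moreover have "j - i < N" using j by auto
        ultimately show False using prim[of "j - i"] 1 by auto
      next
        case 2
        have "w ^ i = w ^ j * w ^ (i - j)" using 2 by (simp add: power_add[symmetric])
        hence "w ^ (i - j) = 1" using e w0 by simp
        moreover have "i - j < N" using i by auto
        ultimately show False using prim[of "i - j"] 2 by auto
      qed
    qed
  qed
  have sub: "(\<lambda>i. w ^ i) ` {..<N} \<subseteq> {x. x ^ N = 1}"
    using w by (auto simp: power_mult[symmetric] mult.commute[of _ N] power_mult)
  have "card ((\<lambda>i. w ^ i) ` {..<N}) = N" using card_image[OF inj] by simp
  hence "(\<lambda>i. w ^ i) ` {..<N} = {x. x ^ N = 1}"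
    using roots_card[OF N, where 'k='k] sub by (metis card_seteq)
  thus ?thesis using z by auto
qed

lemma prim_ord:
  fixes w :: "'k::field" and p M :: nat
  assumes p: "prime p" and M: "M \<ge> 1" and w1: "w ^ (p ^ M) = 1" and w2: "w ^ (p ^ (M - 1)) \<noteq> 1"
  shows "w ^ e = 1 \<longleftrightarrow> p ^ M dvd e"
proof
  assume e: "w ^ e = 1"
  have pM0: "p ^ M \<noteq> 0" using p by (simp add: prime_gt_0_nat)
  obtain x y where xy: "p ^ M * x = e * y + gcd (p ^ M) e" using bezout_nat[OF pM0] by blast
  have "w ^ (p ^ M * x) = w ^ (e * y) * w ^ gcd (p ^ M) e" by (simp add: xy power_add)
  hence g: "w ^ gcd (p ^ M) e = 1" using w1 e by (simp add: power_mult)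
  have "gcd (p ^ M) e dvd p ^ M" by simp
  then obtain j where j: "j \<le> M" "gcd (p ^ M) e = p ^ j" using divides_primepow_nat[OF p] by blast
  show "p ^ M dvd e"
  proof (cases "j = M")
    case True thus ?thesis using j by (metis gcd_dvd2)
  next
    case False
    hence "j \<le> M - 1" using j by simp
    hence "p ^ j dvd p ^ (M - 1)" by (simp add: le_imp_power_dvd)
    then obtain r where "p ^ (M - 1) = p ^ j * r" by blast
    hence "w ^ (p ^ (M - 1)) = 1" using g j by (simp add: power_mult)
    thus ?thesis using w2 by simp
  qed
next
  assume "p ^ M dvd e"
  then obtain r where "e = p ^ M * r" by blast
  thus "w ^ e = 1" using w1 by (simp add: power_mult)
qed

lemma prim_ord_int:
  fixes w :: "'k::field" and p M :: nat
  assumes p: "prime p" and M: "M \<ge> 1" and w1: "w ^ (p ^ M) = 1" and w2: "w ^ (p ^ (M - 1)) \<noteq> 1"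
  shows "w powi e = 1 \<longleftrightarrow> int (p ^ M) dvd e"
proof (cases "e \<ge> 0")
  case True
  hence "w powi e = w ^ nat e" by (simp add: power_int_def)
  moreover have ne: "int (nat e) = e" using True by simp
  moreover have "int (p ^ M) dvd int (nat e) \<longleftrightarrow> p ^ M dvd nat e" by (rule int_dvd_int_iff)
  ultimately show ?thesis using prim_ord[OF assms, of "nat e"] by simp
next
  case False
  hence "w powi e = inverse (w ^ nat (-e))" by (simp add: power_int_def power_inverse)
  hence "w powi e = 1 \<longleftrightarrow> w ^ nat (-e) = 1" by (metis inverse_1 inverse_inverse_eq)
  also have "\<dots> \<longleftrightarrow> p ^ M dvd nat (-e)" by (rule prim_ord[OF assms, of "nat (-e)"])
  also have "\<dots> \<longleftrightarrow> int (p ^ M) dvd int (nat (-e))" by (rule int_dvd_int_iff[symmetric])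
  also have "int (nat (-e)) = -e" using False by simp
  also have "int (p ^ M) dvd -e \<longleftrightarrow> int (p ^ M) dvd e" by (rule dvd_minus_iff)
  finally show ?thesis .
qed

lemma prim_prim:
  fixes w :: "'k::field" and p M :: nat
  assumes p: "prime p" and M: "M \<ge> 1" and w1: "w ^ (p ^ M) = 1" and w2: "w ^ (p ^ (M - 1)) \<noteq> 1"
  shows "\<And>i. 0 < i \<Longrightarrow> i < p ^ M \<Longrightarrow> w ^ i \<noteq> 1"
  using prim_ord[OF assms] by (metis nat_dvd_not_less)

lemma prim_eq_int:
  fixes w :: "'k::field" and p M :: nat
  assumes p: "prime p" and M: "M \<ge> 1" and w1: "w ^ (p ^ M) = 1" and w2: "w ^ (p ^ (M - 1)) \<noteq> 1"
  shows "w powi a = w powi b \<longleftrightarrow> int (p ^ M) dvd a - b"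
proof -
  have "p ^ M > 0" using p by (simp add: prime_gt_0_nat)
  hence "(0::'k) ^ (p ^ M) = 0" by (rule zero_power)
  hence w0: "w \<noteq> 0" using w1 by (metis zero_neq_one)
  have "w powi a = w powi b \<longleftrightarrow> w powi (a - b) = 1"
    using w0 by (auto simp: power_int_diff)
  thus ?thesis using prim_ord_int[OF assms] by simp
qed

lemma prim_sub:
  fixes w :: "'k::field" and p M j :: nat
  assumes w1: "w ^ (p ^ M) = 1" and w2: "w ^ (p ^ (M - 1)) \<noteq> 1" and j: "1 \<le> j" "j \<le> M"
  shows "(w ^ (p ^ (M - j))) ^ (p ^ j) = 1 \<and> (w ^ (p ^ (M - j))) ^ (p ^ (j - 1)) \<noteq> 1"
proof -
  have "(w ^ (p ^ (M - j))) ^ (p ^ j) = w ^ (p ^ M)" using j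
    by (simp add: power_mult[symmetric] power_add[symmetric])
  moreover have "(w ^ (p ^ (M - j))) ^ (p ^ (j - 1)) = w ^ (p ^ (M - 1))" using j
    by (simp add: power_mult[symmetric] power_add[symmetric])
  ultimately show ?thesis using w1 w2 by simp
qed

lemma aut_basic:
  assumes "field_aut s"
  shows "s 0 = 0" "s (- x) = - s x" "s (inverse x) = inverse (s x)" "s (x ^ k) = s x ^ k"
    "s (x powi e) = s x powi e" "s (x - y) = s x - s y" "s 1 = 1" "s (x * y) = s x * s y"
proof -
  have add: "\<And>x y. s (x + y) = s x + s y" and mul: "\<And>x y. s (x * y) = s x * s y"
    and one: "s 1 = 1" using assms by (auto simp: field_aut_def)
  have "s 0 + s 0 = s 0 + 0" using add[of 0 0] by simp
  then show z: "s 0 = 0" by (metis add_left_cancel)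
  show n: "\<And>x. s (- x) = - s x" using add z by (metis add.right_inverse add_eq_0_iff)
  show i: "\<And>x. s (inverse x) = inverse (s x)"
  proof -
    fix x :: 'a
    show "s (inverse x) = inverse (s x)"
    proof (cases "x = 0")
      case True thus ?thesis using z by simp
    next
      case False
      have "s x * s (inverse x) = 1" using mul[of x "inverse x"] one False by simp
      thus ?thesis by (metis inverse_unique)
    qed
  qed
  have pw: "\<And>x k. s (x ^ k) = s x ^ k" by (induct_tac k) (simp_all add: one mul)
  show "s (x ^ k) = s x ^ k" by (rule pw)
  show "s (x powi e) = s x powi e"
    unfolding power_int_def by (simp add: pw i)
  show "s (x - y) = s x - s y" using add n by (metis diff_conv_add_uminus)
  show "s 1 = 1" by (rule one)
  show "s (x * y) = s x * s y" by (rule mul)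
qed

lemma aut_funpow:
  assumes "field_aut s" shows "field_aut (s ^^ q)"
proof (induct q)
  case 0 thus ?case by (simp add: field_aut_def bij_id[unfolded id_def])
next
  case (Suc q)
  thus ?case using assms unfolding field_aut_def by (auto intro: bij_comp)
qed



lemma sq_dvd: "((x::int) - 1)^2 dvd x^i - 1 - int i * (x - 1)"
proof (induct i)
  case 0 thus ?case by simp
next
  case (Suc i)
  have "x^Suc i - 1 - int (Suc i) * (x - 1) = x * (x^i - 1 - int i * (x - 1)) + int i * (x - 1)^2"
    by (simp add: algebra_simps power2_eq_square)
  thus ?case using Suc by (simp add: dvd_add)
qed

lemma sum_T:
  fixes x :: int and p :: nat assumes p: "prime p" and px: "int p dvd x - 1"
    and two: "p = 2 \<longrightarrow> 4 dvd x - 1"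
  shows "(int p)^2 dvd (\<Sum>i<p. x^i) - int p"
proof (cases "p = 2")
  case True
  have "(\<Sum>i<p. x^i) - int p = x - 1" unfolding True by (simp add: numeral_2_eq_2)
  thus ?thesis using True two by simp
next
  case False
  have "p > 2" using prime_ge_2_nat[OF p] False by linarith
  hence odd: "odd p" using prime_odd_nat[OF p] by blast
  then obtain q where q: "p = 2 * q + 1" by (metis oddE)
  have s: "(\<Sum>i<p. int i) = int p * int q"
  proof -
    have "(\<Sum>i<p. int i) = int (\<Sum>i<p. i)" by simp
    also have "(\<Sum>i<p. i) = p * q" using q Sum_Ico_nat[of 0 p] by (simp add: lessThan_atLeast0)
    finally show ?thesis by simp
  qed
  have "(x - 1)^2 dvd (\<Sum>i<p. x^i - 1 - int i * (x - 1))"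
    by (rule dvd_sum) (rule sq_dvd)
  moreover have "(\<Sum>i<p. x^i - 1 - int i * (x - 1)) = (\<Sum>i<p. x^i) - int p - (x - 1) * (int p * int q)"
    by (simp add: sum_subtractf sum_distrib_left s[symmetric] mult.commute)
  ultimately have A: "(x - 1)^2 dvd (\<Sum>i<p. x^i) - int p - (x - 1) * (int p * int q)" by simp
  have B: "(int p)^2 dvd (x - 1)^2" using px by (simp add: dvd_power_same)
  have C: "(int p)^2 dvd (x - 1) * (int p * int q)" using px
    by (simp add: power2_eq_square mult_dvd_mono)
  have "(int p)^2 dvd ((\<Sum>i<p. x^i) - int p - (x - 1) * (int p * int q)) + (x - 1) * (int p * int q)"
    using dvd_trans[OF B A] C by (rule dvd_add)
  thus ?thesis by simp
qed

lemma lte_step: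
  fixes x :: int and p a :: nat assumes p: "prime p" and a: "a \<ge> 1"
    and d1: "int p ^ a dvd x - 1" and d2: "\<not> int p ^ (a+1) dvd x - 1"
    and two: "p = 2 \<longrightarrow> a \<ge> 2"
  shows "int p ^ (a+1) dvd x^p - 1 \<and> \<not> int p ^ (a+2) dvd x^p - 1"
proof -
  define T where "T = (\<Sum>i<p. x^i)"
  have e: "x^p - 1 = (x - 1) * T" unfolding T_def by (rule power_diff_1_eq)
  have px: "int p dvd x - 1" 
  proof -
    have "int p ^ 1 dvd int p ^ a" using a by (rule le_imp_power_dvd)
    thus ?thesis using d1 by (simp add: dvd_trans)
  qed
  have "p = 2 \<longrightarrow> 4 dvd x - 1"
  proof
    assume "p = 2"
    hence "2 \<le> a" using two by simp
    hence "int p ^ 2 dvd int p ^ a" by (rule le_imp_power_dvd)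
    thus "4 dvd x - 1" using d1 \<open>p = 2\<close> by (auto intro: dvd_trans)
  qed
  from sum_T[OF p px this] obtain r where r: "T - int p = (int p)^2 * r" unfolding T_def by blast
  hence T: "T = int p * (1 + int p * r)" by (simp add: algebra_simps power2_eq_square)
  from d1 obtain u where u: "x - 1 = int p ^ a * u" by blast
  have pu: "\<not> int p dvd u"
  proof
    assume "int p dvd u"
    then obtain v where "u = int p * v" by blast
    hence "x - 1 = int p ^ (a+1) * v" using u by simp
    thus False using d2 by (metis dvd_triv_left)
  qed
  have ee: "x^p - 1 = int p ^ (a+1) * (u * (1 + int p * r))" using e T u by (simp add: algebra_simps)
  have pp: "prime (int p)" using p by simp
  have n1: "\<not> int p dvd 1 + int p * r"
  proof
    assume "int p dvd 1 + int p * r"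
    hence "int p dvd 1" by (simp add: dvd_add_left_iff)
    thus False using pp by (simp add: prime_int_iff)
  qed
  have "\<not> int p dvd u * (1 + int p * r)" using pp pu n1 by (simp add: prime_dvd_mult_iff)
  moreover have "int p ^ (a+2) = int p ^ (a+1) * int p" by simp
  ultimately have "\<not> int p ^ (a+2) dvd x^p - 1" unfolding ee
    using pp by (metis dvd_mult_cancel_left mult_eq_0_iff not_prime_0 power_eq_0_iff)
  thus ?thesis unfolding ee by simp
qed

lemma lte:
  fixes x :: int and p a :: nat assumes p: "prime p" and a: "a \<ge> 1"
    and d1: "int p ^ a dvd x - 1" and d2: "\<not> int p ^ (a+1) dvd x - 1"
    and two: "p = 2 \<longrightarrow> a \<ge> 2"
  shows "int p ^ (a+j) dvd x^(p^j) - 1 \<and> \<not> int p ^ (a+j+1) dvd x^(p^j) - 1"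
proof (induct j)
  case 0 thus ?case using d1 d2 by simp
next
  case (Suc j)
  have "int p ^ (a+j+1) dvd (x^(p^j))^p - 1 \<and> \<not> int p ^ (a+j+2) dvd (x^(p^j))^p - 1"
  proof -
    have h: "p = 2 \<longrightarrow> a + j \<ge> 2" using two by auto
    have h1: "a + j \<ge> 1" using a by simp
    show ?thesis using lte_step[OF p h1 conjunct1[OF Suc] conjunct2[OF Suc] h] by simp
  qed
  thus ?case by (simp add: power_mult[symmetric] mult.commute)
qed



lemma powi_nat_mult: "z powi (int a * int b) = z ^ (a * b)"
  by (metis of_nat_mult power_int_of_nat)

lemma fix_funpow: "s x = x \<Longrightarrow> (s ^^ q) x = x"
  by (induct q) auto

lemma aut_subfield:
  assumes "field_aut t" shows "subfield_set {x. t x = x}"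
  using aut_basic[OF assms] assms unfolding subfield_set_def field_aut_def by auto

lemma contains_mu_down:
  assumes c: "contains_mu A p k" and cl: "\<And>z j. z \<in> A \<Longrightarrow> z ^ j \<in> A" and j: "1 \<le> j" "j \<le> k"
  shows "contains_mu A p j"
proof -
  obtain z where z: "z \<in> A" "z ^ (p ^ k) = 1" "z ^ (p ^ (k - 1)) \<noteq> 1" using c unfolding contains_mu_def by blast
  show ?thesis unfolding contains_mu_def using prim_sub[OF z(2,3) j] cl[OF z(1)] by blast
qed

locale Setup =
  fixes \<sigma> :: "'k::field \<Rightarrow> 'k" and p n :: nat and \<xi> :: 'k and k0 :: nat
  assumes prime: "prime p" and n1: "n \<ge> 1" and cg: "cyclic_gen \<sigma> p n"
    and xiF: "\<sigma> \<xi> = \<xi>" and xip: "\<xi> ^ p = 1" and xi1: "\<xi> \<noteq> 1"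
    and k0: "k0 \<ge> 1" and k0mu: "contains_mu (UNIV::'k set) p k0"
    and cyc: "\<And>S. subfield_set S \<Longrightarrow> baseF \<sigma> \<subseteq> S \<Longrightarrow> {z. z ^ (p ^ k0) = 1} \<subseteq> S \<Longrightarrow> S = UNIV"
    and two: "p = 2 \<Longrightarrow> (\<exists>y. \<sigma> y = y \<and> y ^ 4 = 1 \<and> y ^ 2 \<noteq> 1)"
begin

lemma aut: "field_aut \<sigma>" using cg by (simp add: cyclic_gen_def)
lemma p0: "p > 0" using prime by (simp add: prime_gt_0_nat)
lemma p1: "p > 1" by (rule prime_gt_1_nat[OF prime])

lemma fix_all:
  assumes t: "field_aut t" and tF: "\<And>x. \<sigma> x = x \<Longrightarrow> t x = x"
    and z1: "z ^ (p ^ M) = 1" and z2: "z ^ (p ^ (M - 1)) \<noteq> 1" and M: "M \<ge> k0" and tz: "t z = z"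
  shows "t = id"
proof -
  have "{x. t x = x} = UNIV"
  proof (rule cyc)
    show "subfield_set {x. t x = x}" by (rule aut_subfield[OF t])
    show "baseF \<sigma> \<subseteq> {x. t x = x}" using tF by (auto simp: baseF_def)
    show "{z. z ^ (p ^ k0) = 1} \<subseteq> {x. t x = x}"
    proof
      fix y :: 'k assume y: "y \<in> {z. z ^ (p ^ k0) = 1}"
      define w where "w = z ^ (p ^ (M - k0))"
      have w: "w ^ (p ^ k0) = 1" "w ^ (p ^ (k0 - 1)) \<noteq> 1"
        using prim_sub[OF z1 z2 k0 M] unfolding w_def by auto
      have k1: "p ^ k0 \<ge> 1" using p0 by simp
      obtain i where "y = w ^ i"
        using root_is_power[OF k1 w(1) prim_prim[OF prime k0 w] ] y by auto
      moreover have "t w = w" unfolding w_def using tz aut_basic[OF t] by simp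
      ultimately show "y \<in> {x. t x = x}" using aut_basic[OF t] by simp
    qed
  qed
  hence "\<And>x. t x = x" by blast
  thus ?thesis by (simp add: fun_eq_iff)
qed

lemma not_id_n1: "\<sigma> ^^ (p ^ (n - 1)) \<noteq> id" using cg by (simp add: cyclic_gen_def)
lemma id_n: "\<sigma> ^^ (p ^ n) = id" using cg by (simp add: cyclic_gen_def)
lemma not_id: "\<sigma> \<noteq> id" using not_id_n1 by (metis id_funpow)

lemma fix_n1:
  assumes "z ^ (p ^ M) = 1" "z ^ (p ^ (M - 1)) \<noteq> 1" "M \<ge> k0" "(\<sigma> ^^ (p ^ (n - 1))) z = z"
  shows False
  using fix_all[OF aut_funpow[OF aut] fix_funpow assms] not_id_n1 by blast

lemma fix_1:
  assumes "z ^ (p ^ M) = 1" "z ^ (p ^ (M - 1)) \<noteq> 1" "M \<ge> k0" "\<sigma> z = z"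
  shows False
  using fix_all[OF aut _ assms] not_id by blast

end



context Setup
begin

lemma sig_Z:
  assumes "\<sigma> z = z powi c" "z \<noteq> 0"
  shows "\<sigma> (z powi e) = z powi (c * e)"
  using assms aut_basic[OF aut] by (simp add: power_int_mult)

lemma sig_Z_pow:
  assumes "\<sigma> z = z powi c" "z \<noteq> 0"
  shows "(\<sigma> ^^ l) (z powi e) = z powi (c ^ l * e)"
proof (induct l)
  case 0 thus ?case by simp
next
  case (Suc l)
  show ?case using Suc sig_Z[OF assms, of "c ^ l * e"] by (simp add: mult.assoc)
qed

lemma fixed_root_cong:
  assumes z1: "z ^ (p ^ M) = 1" and z2: "z ^ (p ^ (M - 1)) \<noteq> 1" and M: "M \<ge> 1"
    and c: "\<sigma> z = z powi c" and j: "1 \<le> j" "j \<le> M" and y: "\<sigma> y = y" and y1: "y ^ (p ^ j) = 1"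
  shows "\<exists>i<p ^ j. y = z powi (int (p ^ (M - j)) * int i) \<and> int (p ^ j) dvd int i * (c - 1)"
proof -
  have z0: "z \<noteq> 0" using z1 p0 by (metis power_0_left power_eq_0_iff zero_neq_one)
  define w where "w = z ^ (p ^ (M - j))"
  have w: "w ^ (p ^ j) = 1" "w ^ (p ^ (j - 1)) \<noteq> 1"
    using prim_sub[OF z1 z2 j] unfolding w_def by auto
  have k1: "p ^ j \<ge> 1" using p0 by simp
  obtain i where i: "i < p ^ j" "y = w ^ i"
    using root_is_power[OF k1 w(1) prim_prim[OF prime j(1) w] y1] by auto
  have yz: "y = z powi (int (p ^ (M - j)) * int i)"
    using i unfolding w_def by (simp only: powi_nat_mult power_mult)
  have "\<sigma> y = z powi (c * (int (p ^ (M - j)) * int i))" using yz sig_Z[OF c z0] by simp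
  hence "z powi (c * (int (p ^ (M - j)) * int i)) = z powi (int (p ^ (M - j)) * int i)" using y yz by simp
  hence "int (p ^ M) dvd c * (int (p ^ (M - j)) * int i) - int (p ^ (M - j)) * int i"
    using prim_eq_int[OF prime M z1 z2] by simp
  moreover have "c * (int (p ^ (M - j)) * int i) - int (p ^ (M - j)) * int i = int (p ^ (M - j)) * (int i * (c - 1))"
    by (simp add: algebra_simps)
  moreover have "int (p ^ M) = int (p ^ (M - j)) * int (p ^ j)" using j by (simp add: power_add[symmetric])
  ultimately have "int (p ^ j) dvd int i * (c - 1)" using p0 by (simp add: mult.commute[of _ "int (p ^ j)"])
  thus ?thesis using i yz by blast
qed

lemma lemmaG:
  assumes z1: "z ^ (p ^ M) = 1" and z2: "z ^ (p ^ (M - 1)) \<noteq> 1" and M: "M \<ge> k0" "M \<ge> 1"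
    and M2: "p = 2 \<Longrightarrow> M \<ge> 2"
  shows "\<exists>c w. \<sigma> z = z powi c \<and> int p dvd c - 1 \<and> w \<ge> 1 \<and> (p = 2 \<longrightarrow> w \<ge> 2) \<and>
      int p ^ w dvd c - 1 \<and> \<not> int p ^ (w + 1) dvd c - 1 \<and> M = w + n"
proof -
  have z0: "z \<noteq> 0" using z1 p0 by (metis power_0_left power_eq_0_iff zero_neq_one)
  have k1: "p ^ M \<ge> 1" using p0 by simp
  have "(\<sigma> z) ^ (p ^ M) = 1" using z1 aut_basic[OF aut] by (metis)
  then obtain i where i: "\<sigma> z = z ^ i"
    using root_is_power[OF k1 z1 prim_prim[OF prime M(2) z1 z2]] by auto
  define c where "c = int i"
  have c: "\<sigma> z = z powi c" using i by (simp add: c_def)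
  obtain i1 where i1: "i1 < p ^ 1" "\<xi> = z powi (int (p ^ (M - 1)) * int i1)" "int (p ^ 1) dvd int i1 * (c - 1)"
    using fixed_root_cong[OF z1 z2 M(2) c _ M(2) xiF] xip by auto
  have "i1 \<noteq> 0"
  proof
    assume "i1 = 0" hence "\<xi> = 1" using i1(2) by simp
    thus False using xi1 by simp
  qed
  hence "\<not> int p dvd int i1" using i1(1) by (simp add: int_dvd_int_iff nat_dvd_not_less)
  hence pc: "int p dvd c - 1" using i1(3) prime by (simp add: prime_dvd_mult_iff)
  have four: "p = 2 \<longrightarrow> 4 dvd c - 1"
  proof
    assume p2: "p = 2"
    obtain y where y: "\<sigma> y = y" "y ^ 4 = 1" "y ^ 2 \<noteq> 1" using two[OF p2] by blast
    have y4: "y ^ (p ^ 2) = 1" using y p2 by simp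
    obtain i2 where i2: "i2 < p ^ 2" "y = z powi (int (p ^ (M - 2)) * int i2)" "int (p ^ 2) dvd int i2 * (c - 1)"
      using fixed_root_cong[OF z1 z2 M(2) c _ M2[OF p2] y(1) y4] by auto
    have "odd i2"
    proof
      assume "even i2"
      then obtain h where h: "i2 = 2 * h" by blast
      have "M = (M - 2) + 2" using M2[OF p2] by simp
      hence pm: "p ^ M = p ^ (M - 2) * p ^ 2" by (metis power_add)
      have y2: "y = z ^ (p ^ (M - 2) * i2)" using i2(2) by (simp only: powi_nat_mult)
      have "p ^ (M - 2) * i2 * 2 = p ^ M * h" using pm h p2 by simp
      hence "y ^ 2 = z ^ (p ^ M * h)" using y2 by (simp add: power_mult[symmetric])
      also have "\<dots> = 1" using z1 by (simp add: power_mult)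
      finally show False using y(3) by simp
    qed
    moreover have "i2 < 4" using i2(1) p2 by simp
    ultimately have "i2 = 1 \<or> i2 = 3" by presburger
    moreover have "int (p ^ 2) = 4" using p2 by simp
    ultimately show "4 dvd c - 1"
    proof (elim disjE)
      assume "i2 = 3" and q: "int (p ^ 2) = 4"
      hence d3: "4 dvd 3 * (c - 1)" using i2(3) by simp
      have "4 dvd 4 * (c - 1) - 3 * (c - 1)" using d3 by (intro dvd_diff) simp_all
      thus ?thesis by simp
    qed (use i2(3) in simp)
  qed
  have cz: "\<not> int p ^ M dvd c - 1"
  proof
    assume "int p ^ M dvd c - 1"
    hence "z powi c = z powi 1" using prim_eq_int[OF prime M(2) z1 z2, of c 1] by simp
    hence "\<sigma> z = z" using c by simp
    thus False using fix_1[OF z1 z2 M(1)] by blast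
  qed
  hence c1: "c - 1 \<noteq> 0" by auto
  have nu: "\<not> is_unit (int p)" using p1 by simp
  define w where "w = multiplicity (int p) (c - 1)"
  have wd: "int p ^ w dvd c - 1" by (simp add: w_def multiplicity_dvd)
  have wiff: "\<And>k. int p ^ k dvd c - 1 \<longleftrightarrow> k \<le> w"
    unfolding w_def by (rule power_dvd_iff_le_multiplicity[OF c1 nu])
  have wnd: "\<not> int p ^ (w + 1) dvd c - 1" using wiff[of "w + 1"] by simp
  have w1: "w \<ge> 1" using wiff[of 1] pc by (simp del: power_Suc)
  have w2: "p = 2 \<longrightarrow> w \<ge> 2" using wiff[of 2] four by auto
  note L = lte[OF prime w1 wd wnd w2]
  have "(\<sigma> ^^ (p ^ n)) z = z" using id_n by simp
  moreover have "(\<sigma> ^^ (p ^ n)) z = z powi (c ^ (p ^ n))" using sig_Z_pow[OF c z0, of "p ^ n" 1] by simp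
  ultimately have "z powi (c ^ (p ^ n)) = z powi 1" by simp
  hence dn: "int p ^ M dvd c ^ (p ^ n) - 1" using prim_eq_int[OF prime M(2) z1 z2, of "c ^ (p ^ n)" 1] by simp
  have le1: "M \<le> w + n"
  proof (rule ccontr)
    assume "\<not> M \<le> w + n"
    hence "int p ^ (w + n + 1) dvd int p ^ M" by (intro le_imp_power_dvd) simp
    hence "int p ^ (w + n + 1) dvd c ^ (p ^ n) - 1" using dn by (rule dvd_trans)
    thus False using L[of n] by simp
  qed
  have le2: "w + n \<le> M"
  proof (rule ccontr)
    assume "\<not> w + n \<le> M"
    hence "int p ^ M dvd int p ^ (w + (n - 1))" by (intro le_imp_power_dvd) simp
    hence "int p ^ M dvd c ^ (p ^ (n - 1)) - 1" using conjunct1[OF L[of "n - 1"]] by (rule dvd_trans)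
    hence "z powi (c ^ (p ^ (n - 1))) = z powi 1" using prim_eq_int[OF prime M(2) z1 z2, of "c ^ (p ^ (n - 1))" 1] by simp
    moreover have "(\<sigma> ^^ (p ^ (n - 1))) z = z powi (c ^ (p ^ (n - 1)))"
      using sig_Z_pow[OF c z0, of "p ^ (n - 1)" 1] by simp
    ultimately have "(\<sigma> ^^ (p ^ (n - 1))) z = z" by simp
    thus False using fix_n1[OF z1 z2 M(1)] by blast
  qed
  show ?thesis using c pc w1 w2 wd wnd le1 le2 by (intro exI[of _ c] exI[of _ w]) auto
qed

end


lemma mu_level_fin:
  assumes B: "\<And>M. contains_mu A p M \<Longrightarrow> M < B" and c1: "contains_mu A p 1"
  defines "G \<equiv> GREATEST k. k = 0 \<or> contains_mu A p k"
  shows "mu_level A p = enat G \<and> contains_mu A p G \<and> (\<forall>M. contains_mu A p M \<longrightarrow> M \<le> G)"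
proof -
  have nall: "\<not> (\<forall>k\<ge>1. contains_mu A p k)"
  proof
    assume "\<forall>k\<ge>1. contains_mu A p k"
    hence "contains_mu A p (B + 1)" by simp
    thus False using B[of "B + 1"] by simp
  qed
  have bd: "\<And>y. y = 0 \<or> contains_mu A p y \<Longrightarrow> y \<le> B" using B by (auto intro: less_imp_le)
  have P1: "1 = 0 \<or> contains_mu A p 1" using c1 by simp
  have g: "G = 0 \<or> contains_mu A p G" unfolding G_def by (rule GreatestI_nat[where P="\<lambda>k. k = 0 \<or> contains_mu A p k", OF P1 bd])
  have le: "\<And>M. contains_mu A p M \<Longrightarrow> M \<le> G" unfolding G_def
    by (rule Greatest_le_nat[where P="\<lambda>k. k = 0 \<or> contains_mu A p k", OF _ bd]) simp_all
  have "1 \<le> G" using le[OF c1] .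
  hence "contains_mu A p G" using g by simp
  moreover have "mu_level A p = enat G" using nall unfolding mu_level_def G_def by simp
  ultimately show ?thesis using le by blast
qed

lemma mu_gt1:
  assumes cl: "\<And>z j. z \<in> A \<Longrightarrow> z ^ j \<in> A" and g: "mu_level A p > 1"
  shows "contains_mu A p 2"
proof (cases "\<forall>k\<ge>1. contains_mu A p k")
  case True thus ?thesis by simp
next
  case False
  then obtain k1 where k1: "k1 \<ge> 1" "\<not> contains_mu A p k1" by blast
  have bd: "\<And>y. y = 0 \<or> contains_mu A p y \<Longrightarrow> y \<le> k1"
  proof -
    fix y assume "y = 0 \<or> contains_mu A p y"
    thus "y \<le> k1"
    proof
      assume "contains_mu A p y"
      thus ?thesis using contains_mu_down[OF _ cl k1(1)] k1(2) by (metis nat_le_linear)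
    qed simp
  qed
  define G where "G = (GREATEST k. k = 0 \<or> contains_mu A p k)"
  have gg: "G = 0 \<or> contains_mu A p G" unfolding G_def
    by (rule GreatestI_nat[where P="\<lambda>k. k = 0 \<or> contains_mu A p k" and k=0, OF _ bd]) simp_all
  have "mu_level A p = enat G" using False unfolding mu_level_def G_def by simp
  hence "G > 1" using g by (simp add: one_enat_def)
  hence "contains_mu A p G" using gg by simp
  thus ?thesis using contains_mu_down[OF _ cl] \<open>G > 1\<close> by simp
qed

lemma prod_powi:
  fixes z :: "'k::field" assumes "z \<noteq> 0"
  shows "(\<Prod>l<(N::nat). z powi f l) = z powi (\<Sum>l<N. f l)"
  by (induct N) (simp_all add: power_int_add assms)

lemma aut_prod:
  assumes "field_aut s" shows "s (\<Prod>l<(N::nat). f l) = (\<Prod>l<N. s (f l))"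
  by (induct N) (simp_all add: aut_basic[OF assms])

lemma normj_1: assumes "field_aut s" shows "normj s p j 1 = 1"
  unfolding normj_def using aut_basic[OF aut_funpow[OF assms]] by simp

context Setup
begin

lemma normj_Z:
  assumes "\<sigma> z = z powi c" "z \<noteq> 0"
  shows "normj \<sigma> p j (z powi e) = z powi (e * (\<Sum>l<p ^ j. c ^ l))"
  unfolding normj_def sig_Z_pow[OF assms]
  by (simp add: prod_powi[OF assms(2)] sum_distrib_left mult.commute)

lemma normj_fixed: "\<sigma> (normj \<sigma> p n x) = normj \<sigma> p n x"
proof (cases "x = 0")
  case True
  have "p ^ n > 0" using p0 by simp
  hence "normj \<sigma> p n x = 0" unfolding normj_def using True aut_basic[OF aut_funpow[OF aut]]
    by (auto intro: bexI[of _ 0])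
  thus ?thesis using aut_basic[OF aut] by simp
next
  case False
  define g where "g l = (\<sigma> ^^ l) x" for l
  have g0: "g 0 = x" by (simp add: g_def)
  have gN: "g (p ^ n) = x" using id_n by (simp add: g_def)
  have "\<sigma> (normj \<sigma> p n x) = (\<Prod>l<p ^ n. g (Suc l))"
    unfolding normj_def aut_prod[OF aut] by (simp add: g_def)
  moreover have "g 0 * (\<Prod>l<p ^ n. g (Suc l)) = (\<Prod>l<p ^ n. g l) * g (p ^ n)"
    using prod.lessThan_Suc_shift[of g "p ^ n"] prod.lessThan_Suc[of g "p ^ n"] by simp
  ultimately show ?thesis using g0 gN False unfolding normj_def g_def[symmetric]
    by (simp add: mult.commute)
qed

lemma bound_mu:
  assumes "contains_mu (UNIV::'k set) p M" shows "M < max k0 2 + n"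
proof (rule ccontr)
  assume "\<not> M < max k0 2 + n"
  hence M: "M \<ge> k0" "M \<ge> 1" "p = 2 \<Longrightarrow> M \<ge> 2" "M \<ge> max k0 2 + n" by auto
  obtain z :: 'k where z: "z ^ (p ^ M) = 1" "z ^ (p ^ (M - 1)) \<noteq> 1" using assms unfolding contains_mu_def by blast
  obtain c w where cw: "\<sigma> z = z powi c" "int p dvd c - 1" "w \<ge> 1" "int p ^ w dvd c - 1" "M = w + n"
    using lemmaG[OF z M(1,2,3)] by blast
  have z0: "z \<noteq> 0" using z(1) p0 by (metis power_0_left power_eq_0_iff zero_neq_one)
  have wk: "w \<ge> k0" using M(4) cw(5) by simp
  define y where "y = z ^ (p ^ n)"
  have y: "y ^ (p ^ w) = 1" "y ^ (p ^ (w - 1)) \<noteq> 1"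
    using prim_sub[OF z cw(3)] cw(5) unfolding y_def by auto
  have "\<sigma> y = z powi (c * int (p ^ n))" unfolding y_def power_int_of_nat[symmetric]
    by (rule sig_Z[OF cw(1) z0])
  also have "\<dots> = z powi (int (p ^ n))"
  proof -
    have "int p ^ M = int p ^ n * int p ^ w" using cw(5) by (simp add: power_add)
    moreover have "c * int (p ^ n) - int (p ^ n) = int p ^ n * (c - 1)" by (simp add: algebra_simps)
    ultimately have "int p ^ M dvd c * int (p ^ n) - int (p ^ n)" using cw(4) by (simp add: mult_dvd_mono)
    thus ?thesis using prim_eq_int[OF prime M(2) z] by simp
  qed
  also have "\<dots> = y" unfolding y_def by (rule power_int_of_nat)
  finally show False using fix_1[OF y wk] by blast
qed

end



lemma lex_none:
  assumes "length a' = m" "a' \<noteq> replicate m None" "m \<ge> 1"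
  shows "lex_less (replicate m None) a'"
proof -
  have "\<exists>i<m. a' ! i \<noteq> None" using assms by (metis nth_equalityI length_replicate nth_replicate)
  then obtain i0 where i0: "i0 < m \<and> a' ! i0 \<noteq> None" by blast
  define i where "i = (LEAST i. i < m \<and> a' ! i \<noteq> None)"
  have i12: "i < m \<and> a' ! i \<noteq> None" unfolding i_def by (rule LeastI[where P="\<lambda>i. i < m \<and> a' ! i \<noteq> None", OF i0])
  have i3: "\<forall>k<i. a' ! k = None"
  proof (intro allI impI)
    fix k assume "k < i"
    hence "\<not> (k < m \<and> a' ! k \<noteq> None)" unfolding i_def by (rule not_less_Least)
    thus "a' ! k = None" using \<open>k < i\<close> i12 by auto
  qed
  have i: "i < m" "a' ! i \<noteq> None" "\<forall>k<i. a' ! k = None" using i12 i3 by auto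
  have "take i (replicate m None) = take i a'"
    using i assms(1) by (intro nth_equalityI) auto
  moreover have "opt_less (replicate m None ! i) (a' ! i)" using i by (cases "a' ! i") auto
  ultimately show ?thesis unfolding lex_less_def using i assms(1) by auto
qed

theorem proposition3p3:
  fixes \<sigma> :: "'k::field \<Rightarrow> 'k" and p n m :: nat and \<xi> :: 'k and d :: int
  assumes "prime p" and "n \<ge> 1" and "cyclic_gen \<sigma> p n"
    and "of_nat p \<noteq> (0::'k)"
    and "\<xi> \<in> baseF \<sigma>" and "\<xi> ^ p = 1" and "\<xi> \<noteq> 1"
    and "m \<ge> 1"
    and "cyclotomic \<sigma> p"
    and "p = 2 \<longrightarrow> mu_level (baseF \<sigma>) p > 1"
    and "chi_cong \<sigma> p d (case mu_level (UNIV::'k set) p of enat v \<Rightarrow> min m v | \<infinity> \<Rightarrow> m)"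
  shows "minimal_norm_pair \<sigma> p n \<xi> m (replicate m None) d"
proof -
  note prime = assms(1) and n1 = assms(2) and cg = assms(3) and xip = assms(6) and xi1 = assms(7)
    and m1 = assms(8)
  have aut: "field_aut \<sigma>" using cg by (simp add: cyclic_gen_def)
  have xiF: "\<sigma> \<xi> = \<xi>" using assms(5) by (simp add: baseF_def)
  obtain k0 where k0: "k0 \<ge> 1" "contains_mu (UNIV::'k set) p k0"
    and cyc0: "\<forall>S. subfield_set S \<and> baseF \<sigma> \<subseteq> S \<and> {z. z ^ (p ^ k0) = 1} \<subseteq> S \<longrightarrow> S = UNIV"
    using assms(9) unfolding cyclotomic_def by blast
  have cyc: "\<And>S. subfield_set S \<Longrightarrow> baseF \<sigma> \<subseteq> S \<Longrightarrow> {z. z ^ (p ^ k0) = 1} \<subseteq> S \<Longrightarrow> S = UNIV"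
    using cyc0 by blast
  have clF: "\<And>z j. z \<in> baseF \<sigma> \<Longrightarrow> z ^ j \<in> baseF \<sigma>" using aut_basic[OF aut] by (simp add: baseF_def)
  have two: "p = 2 \<Longrightarrow> (\<exists>y. \<sigma> y = y \<and> y ^ 4 = 1 \<and> y ^ 2 \<noteq> 1)"
  proof -
    assume p2: "p = 2"
    hence "contains_mu (baseF \<sigma>) p 2" using mu_gt1[OF clF] assms(10) by blast
    thus ?thesis using p2 by (auto simp: contains_mu_def baseF_def)
  qed
  interpret S: Setup \<sigma> p n \<xi> k0
    using prime n1 cg xiF xip xi1 k0 cyc two by unfold_locales auto
  have c1: "contains_mu (UNIV::'k set) p 1" using xip xi1 by (auto simp: contains_mu_def)
  define G where "G = (GREATEST k. k = 0 \<or> contains_mu (UNIV::'k set) p k)"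
  have GG: "mu_level (UNIV::'k set) p = enat G \<and> contains_mu (UNIV::'k set) p G \<and>
      (\<forall>M. contains_mu (UNIV::'k set) p M \<longrightarrow> M \<le> G)"
    unfolding G_def by (rule mu_level_fin[OF S.bound_mu c1])
  have Gk0: "G \<ge> k0" using GG k0 by blast
  have G1: "G \<ge> 1" using GG c1 by blast
  have G2: "p = 2 \<Longrightarrow> G \<ge> 2"
  proof -
    assume p2: "p = 2"
    then obtain y :: 'k where "y ^ 4 = 1" "y ^ 2 \<noteq> 1" using two by blast
    hence "contains_mu (UNIV::'k set) p 2" using p2 by (auto simp: contains_mu_def)
    thus "G \<ge> 2" using GG by blast
  qed
  obtain \<zeta> :: 'k where z: "\<zeta> ^ (p ^ G) = 1" "\<zeta> ^ (p ^ (G - 1)) \<noteq> 1"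
    using GG unfolding contains_mu_def by blast
  have z0: "\<zeta> \<noteq> 0" using z(1) S.p0 by (metis power_0_left power_eq_0_iff zero_neq_one)
  obtain c w where cw: "\<sigma> \<zeta> = \<zeta> powi c" "int p dvd c - 1" "w \<ge> 1" "p = 2 \<longrightarrow> w \<ge> 2"
      "int p ^ w dvd c - 1" "\<not> int p ^ (w + 1) dvd c - 1" "G = w + n"
    using S.lemmaG[OF z Gk0 G1 G2] by blast
  note L = lte[OF prime cw(3) cw(5) cw(6) cw(4), of n]
  have LG: "int p ^ G dvd c ^ (p ^ n) - 1" "\<not> int p ^ (G + 1) dvd c ^ (p ^ n) - 1" using L cw(7) by auto
  define j where "j = min m G"
  have chi: "\<And>y. y ^ (p ^ j) = 1 \<Longrightarrow> \<sigma> y = y powi d"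
    using assms(11) GG unfolding chi_cong_def j_def by simp
  have j1: "1 \<le> j" "j \<le> G" "j \<le> m" using G1 m1 by (auto simp: j_def)
  have cd: "int p ^ j dvd c - d"
  proof -
    define y where "y = \<zeta> ^ (p ^ (G - j))"
    have y: "y ^ (p ^ j) = 1" using prim_sub[OF z j1(1,2)] unfolding y_def by blast
    have "\<sigma> y = \<zeta> powi (c * int (p ^ (G - j)))" unfolding y_def power_int_of_nat[symmetric]
      by (rule S.sig_Z[OF cw(1) z0])
    moreover have "y powi d = \<zeta> powi (int (p ^ (G - j)) * d)" unfolding y_def power_int_of_nat[symmetric]
      by (simp add: power_int_mult)
    ultimately have "\<zeta> powi (c * int (p ^ (G - j))) = \<zeta> powi (int (p ^ (G - j)) * d)" using chi[OF y] by simp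
    hence "int p ^ G dvd c * int (p ^ (G - j)) - int (p ^ (G - j)) * d"
      using prim_eq_int[OF prime G1 z] by simp
    moreover have "c * int (p ^ (G - j)) - int (p ^ (G - j)) * d = int p ^ (G - j) * (c - d)"
      by (simp add: algebra_simps)
    moreover have "int p ^ G = int p ^ (G - j) * int p ^ j" using j1 by (simp add: power_add[symmetric])
    ultimately show ?thesis using S.p0 by simp
  qed
  define S where "S = (\<Sum>l<p ^ n. c ^ l)"
  have SC: "S * (c - 1) = c ^ (p ^ n) - 1" unfolding S_def by (simp add: power_diff_1_eq mult.commute)
  have pS: "int p dvd S"
  proof -
    have "\<And>l. int p dvd c ^ l - 1"
    proof -
      fix l :: nat
      have "c ^ l - 1 = (c - 1) * (\<Sum>i<l. c ^ i)" by (rule power_diff_1_eq)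
      thus "int p dvd c ^ l - 1" using cw(2) by simp
    qed
    hence "int p dvd (\<Sum>l<p ^ n. c ^ l - 1)" by (intro dvd_sum) auto
    moreover have "(\<Sum>l<p ^ n. c ^ l - 1) = S - int p ^ n" unfolding S_def by (simp add: sum_subtractf)
    moreover have "int p dvd int p ^ n" using n1 by (simp add: dvd_power)
    ultimately have "int p dvd (S - int p ^ n) + int p ^ n" by (metis dvd_add)
    thus ?thesis by simp
  qed
  obtain q2 where q2: "c - 1 = int p * q2" using cw(2) by blast
  have pd: "int p dvd d - 1"
  proof -
    have "int p dvd int p ^ j" using j1 by (simp add: dvd_power)
    hence "int p dvd c - d" using cd by (rule dvd_trans)
    hence "int p dvd (c - 1) - (c - d)" using cw(2) by (rule dvd_diff[rotated])
    thus ?thesis by simp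
  qed
  obtain q1 where q1: "d - 1 = int p * q1" using pd by blast
  obtain t where t: "int p ^ G dvd c - d - int p ^ m * t"
  proof (cases "m \<le> G")
    case True
    hence "j = m" by (simp add: j_def)
    then obtain t where "c - d = int p ^ m * t" using cd by blast
    thus ?thesis using that[of t] by simp
  next
    case False
    hence "j = G" by (simp add: j_def)
    thus ?thesis using that[of 0] cd by simp
  qed
  define E where "E = S * q2"
  define \<eta> where "\<eta> = \<zeta> powi E"
  have eta1: "\<eta> ^ (p ^ 1) = 1"
  proof -
    have "\<eta> ^ (p ^ 1) = \<zeta> powi (E * int p)" unfolding \<eta>_def by (simp add: power_int_mult)
    also have "E * int p = c ^ (p ^ n) - 1" using SC q2 unfolding E_def by (simp add: algebra_simps)
    also have "\<zeta> powi (c ^ (p ^ n) - 1) = \<zeta> powi 0" using prim_eq_int[OF prime G1 z, of "c ^ (p ^ n) - 1" 0] LG(1) by simp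
    finally show ?thesis by simp
  qed
  have eta2: "\<eta> ^ (p ^ (1 - 1)) \<noteq> 1"
  proof
    assume "\<eta> ^ (p ^ (1 - 1)) = 1"
    hence "\<zeta> powi E = \<zeta> powi 0" unfolding \<eta>_def by simp
    hence "int p ^ G dvd E" using prim_eq_int[OF prime G1 z, of E 0] by simp
    hence "int p ^ G * int p dvd E * int p" by (rule mult_dvd_mono) simp
    moreover have "E * int p = c ^ (p ^ n) - 1" using SC q2 unfolding E_def by (simp add: algebra_simps)
    ultimately show False using LG(2) by (simp add: mult.commute)
  qed
  have pp1: "p ^ 1 \<ge> 1" using S.p0 by simp
  obtain a where a: "\<xi> = \<eta> ^ a"
    using root_is_power[OF pp1 eta1 prim_prim[OF prime _ eta1 eta2]] xip by auto
  have xia: "\<xi> = \<zeta> powi (E * int a)" unfolding a \<eta>_def power_int_of_nat[symmetric]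
    by (simp add: power_int_mult)
  define \<alpha> where "\<alpha> = \<zeta> powi (int a)"
  define \<delta> where "\<delta> i = (if i = m then \<zeta> powi (int a * t) else 1)" for i
  have np: "norm_pair \<sigma> p n \<xi> m (replicate m None) d"
    unfolding norm_pair_def
  proof (intro conjI)
    show "1 \<le> m" using m1 .
    show "length (replicate m (None :: nat option)) = m" by simp
    show "\<forall>i<m. case replicate m None ! i of None \<Rightarrow> True | Some t \<Rightarrow> t \<le> n" by simp
    show "case replicate m None ! 0 of None \<Rightarrow> True | Some t \<Rightarrow> t < n" using m1 by simp
    show "int p dvd d - 1" by (rule pd)
    show "\<exists>\<alpha> \<delta>. \<alpha> \<noteq> 0 \<and> (\<forall>i\<le>m. \<delta> i \<noteq> 0) \<and>
        (\<forall>i<m. case replicate m None ! i of None \<Rightarrow> \<delta> i = 1 | Some t \<Rightarrow> \<delta> i \<in> Kfix \<sigma> p t) \<and>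
        \<sigma> \<alpha> = \<alpha> powi d * (\<Prod>i\<le>m. \<delta> i ^ p ^ i) \<and>
        \<xi> = normj \<sigma> p n \<alpha> powi ((d - 1) div int p) * normj \<sigma> p (n - 1) (\<delta> 0) *
          (\<Prod>i\<in>{1..m}. normj \<sigma> p n (\<delta> i) ^ p ^ (i - 1))"
    proof (intro exI conjI)
      show "\<alpha> \<noteq> 0" unfolding \<alpha>_def using z0 by simp
      show "\<forall>i\<le>m. \<delta> i \<noteq> 0" unfolding \<delta>_def using z0 by simp
      show "\<forall>i<m. case replicate m None ! i of None \<Rightarrow> \<delta> i = 1 | Some t \<Rightarrow> \<delta> i \<in> Kfix \<sigma> p t"
        unfolding \<delta>_def by simp
      have P1: "(\<Prod>i\<le>m. \<delta> i ^ p ^ i) = \<delta> m ^ p ^ m"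
        by (simp add: atMost_Suc_eq_insert_0 lessThan_Suc_atMost[symmetric] \<delta>_def prod.lessThan_Suc)
      show "\<sigma> \<alpha> = \<alpha> powi d * (\<Prod>i\<le>m. \<delta> i ^ p ^ i)"
      proof -
        have "\<sigma> \<alpha> = \<zeta> powi (c * int a)" unfolding \<alpha>_def by (rule S.sig_Z[OF cw(1) z0])
        moreover have "\<alpha> powi d * (\<Prod>i\<le>m. \<delta> i ^ p ^ i) = \<zeta> powi (int a * d + int a * t * int (p ^ m))"
        proof -
          have e1: "\<alpha> powi d = \<zeta> powi (int a * d)" by (simp only: \<alpha>_def power_int_mult)
          have e2: "\<delta> m ^ p ^ m = \<zeta> powi (int a * t * int (p ^ m))"
          proof -
            have dm: "\<delta> m = \<zeta> powi (int a * t)" by (simp add: \<delta>_def)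
            show ?thesis by (simp only: dm power_int_mult power_int_of_nat)
          qed
          have e3: "\<zeta> powi (int a * d + int a * t * int (p ^ m)) = \<zeta> powi (int a * d) * \<zeta> powi (int a * t * int (p ^ m))"
            using z0 by (rule power_int_add[OF disjI1])
          show ?thesis by (simp only: P1 e1 e2 e3)
        qed
        moreover have "int p ^ G dvd c * int a - (int a * d + int a * t * int p ^ m)"
        proof -
          have "c * int a - (int a * d + int a * t * int p ^ m) = int a * (c - d - int p ^ m * t)"
            by (simp add: algebra_simps)
          thus ?thesis using t by simp
        qed
        ultimately show ?thesis using prim_eq_int[OF prime G1 z] by simp
      qed
      show "\<xi> = normj \<sigma> p n \<alpha> powi ((d - 1) div int p) * normj \<sigma> p (n - 1) (\<delta> 0) *
          (\<Prod>i\<in>{1..m}. normj \<sigma> p n (\<delta> i) ^ p ^ (i - 1))"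
      proof -
        have N1: "normj \<sigma> p n \<alpha> = \<zeta> powi (int a * S)" unfolding \<alpha>_def S_def
          by (rule S.normj_Z[OF cw(1) z0])
        have N2: "normj \<sigma> p (n - 1) (\<delta> 0) = 1" using m1 normj_1[OF aut] by (simp add: \<delta>_def)
        have Nm: "normj \<sigma> p n (\<delta> m) = \<zeta> powi (int a * t * S)" unfolding \<delta>_def S_def
          by (simp add: S.normj_Z[OF cw(1) z0])
        have P2: "(\<Prod>i\<in>{1..m}. normj \<sigma> p n (\<delta> i) ^ p ^ (i - 1)) = normj \<sigma> p n (\<delta> m) ^ p ^ (m - 1)"
        proof -
          have "m \<in> {1..m}" using m1 by simp
          hence "(\<Prod>i\<in>{1..m}. normj \<sigma> p n (\<delta> i) ^ p ^ (i - 1)) =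
              normj \<sigma> p n (\<delta> m) ^ p ^ (m - 1) * (\<Prod>i\<in>{1..m} - {m}. normj \<sigma> p n (\<delta> i) ^ p ^ (i - 1))"
            by (rule prod.remove[OF finite_atLeastAtMost])
          moreover have "(\<Prod>i\<in>{1..m} - {m}. normj \<sigma> p n (\<delta> i) ^ p ^ (i - 1)) = 1"
            by (rule prod.neutral) (simp add: \<delta>_def normj_1[OF aut])
          ultimately show ?thesis by simp
        qed
        have dq: "(d - 1) div int p = q1" using q1 S.p0 by simp
        have R: "normj \<sigma> p n \<alpha> powi ((d - 1) div int p) * normj \<sigma> p (n - 1) (\<delta> 0) *
            (\<Prod>i\<in>{1..m}. normj \<sigma> p n (\<delta> i) ^ p ^ (i - 1)) =
            \<zeta> powi (int a * S * q1 + int a * t * S * int (p ^ (m - 1)))"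
        proof -
          have f1: "(\<zeta> powi (int a * S)) powi q1 = \<zeta> powi (int a * S * q1)" by (simp only: power_int_mult)
          have f2: "(\<zeta> powi (int a * t * S)) ^ p ^ (m - 1) = \<zeta> powi (int a * t * S * int (p ^ (m - 1)))"
            by (simp only: power_int_mult power_int_of_nat)
          have f3: "\<zeta> powi (int a * S * q1 + int a * t * S * int (p ^ (m - 1))) =
              \<zeta> powi (int a * S * q1) * \<zeta> powi (int a * t * S * int (p ^ (m - 1)))"
            using z0 by (rule power_int_add[OF disjI1])
          show ?thesis by (simp only: P2 N1 N2 Nm dq f1 f2 f3 mult_1_right)
        qed
        define X where "X = q1 + t * int p ^ (m - 1) - q2"
        have pX: "int p * X = - (c - d - int p ^ m * t)"
        proof -
          have "int p * X = (d - 1) + t * (int p * int p ^ (m - 1)) - (c - 1)"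
            unfolding X_def q1 q2 by (simp add: algebra_simps)
          also have "int p * int p ^ (m - 1) = int p ^ m" using m1 by (simp add: power_Suc[symmetric])
          finally show ?thesis by (simp add: algebra_simps)
        qed
        have "int p ^ G dvd int p * X" unfolding pX using t by (simp only: dvd_minus_iff)
        moreover have "int p ^ G = int p * int p ^ (G - 1)" using G1 by (simp add: power_Suc[symmetric])
        ultimately have "int p ^ (G - 1) dvd X" using S.p0 by simp
        hence "int p ^ (G - 1) * int p dvd X * S" using pS by (rule mult_dvd_mono)
        hence "int p ^ G dvd X * S" using \<open>int p ^ G = int p * int p ^ (G - 1)\<close> by (simp add: mult.commute)
        hence "int p ^ G dvd int a * (X * S)" by simp
        moreover have "int a * S * q1 + int a * t * S * int (p ^ (m - 1)) - E * int a = int a * (X * S)"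
          unfolding X_def E_def by (simp add: algebra_simps)
        ultimately have "\<zeta> powi (int a * S * q1 + int a * t * S * int (p ^ (m - 1))) = \<zeta> powi (E * int a)"
          using prim_eq_int[OF prime G1 z] by simp
        thus ?thesis using R xia by simp
      qed
    qed
  qed
  show ?thesis unfolding minimal_norm_pair_def
  proof (intro conjI allI impI)
    show "norm_pair \<sigma> p n \<xi> m (replicate m None) d" by (rule np)
    fix a' d' assume np': "norm_pair \<sigma> p n \<xi> m a' d'"
    show "np_le p m (replicate m None) d a' d'"
    proof (cases "a' = replicate m None")
      case False
      have "length a' = m" using np' by (simp add: norm_pair_def)
      thus ?thesis using lex_none[OF _ False m1] by (simp add: np_le_def)
    next
      case True
      have "vmin p m (d' - 1) \<le> vmin p m (d - 1)"
      proof (rule ccontr)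
        assume H: "\<not> vmin p m (d' - 1) \<le> vmin p m (d - 1)"
        define u where "u = vmin p m (d - 1)"
        have lt: "u < vmin p m (d' - 1)" using H by (simp add: u_def)
        have vm: "vmin p m (d' - 1) \<le> m" by (simp add: vmin_def)
        hence um: "u < m" using lt by simp
        have d1: "d - 1 \<noteq> 0" using um by (auto simp: u_def vmin_def)
        have nun: "\<not> is_unit (int p)" using S.p1 by simp
        have uu: "u = multiplicity (int p) (d - 1)" using um d1 by (auto simp: u_def vmin_def)
        have nd: "\<not> int p ^ (u + 1) dvd d - 1"
          using power_dvd_iff_le_multiplicity[OF d1 nun, of "u + 1"] uu by simp
        have dd': "int p ^ (u + 1) dvd d' - 1"
        proof (cases "d' - 1 = 0")
          case True thus ?thesis by simp
        next
          case False
          hence "u + 1 \<le> multiplicity (int p) (d' - 1)" using lt by (simp add: vmin_def)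
          thus ?thesis by (rule multiplicity_dvd')
        qed
        then obtain e where e: "d' - 1 = int p ^ (u + 1) * e" by blast
        obtain \<alpha> \<delta> where ad0: "\<forall>i<m. case replicate m (None::nat option) ! i of None \<Rightarrow> \<delta> i = 1 | Some t \<Rightarrow> \<delta> i \<in> Kfix \<sigma> p t"
          and xe: "\<xi> = normj \<sigma> p n \<alpha> powi ((d' - 1) div int p) * normj \<sigma> p (n - 1) (\<delta> 0) *
              (\<Prod>i\<in>{1..m}. normj \<sigma> p n (\<delta> i) ^ p ^ (i - 1))"
          using np' unfolding True norm_pair_def by blast
        have ad: "\<forall>i<m. \<delta> i = 1" using ad0 by simp
        have N2: "normj \<sigma> p (n - 1) (\<delta> 0) = 1" using ad m1 normj_1[OF aut] by simp
        have P2: "(\<Prod>i\<in>{1..m}. normj \<sigma> p n (\<delta> i) ^ p ^ (i - 1)) = normj \<sigma> p n (\<delta> m) ^ p ^ (m - 1)"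
        proof -
          have "m \<in> {1..m}" using m1 by simp
          hence "(\<Prod>i\<in>{1..m}. normj \<sigma> p n (\<delta> i) ^ p ^ (i - 1)) =
              normj \<sigma> p n (\<delta> m) ^ p ^ (m - 1) * (\<Prod>i\<in>{1..m} - {m}. normj \<sigma> p n (\<delta> i) ^ p ^ (i - 1))"
            by (rule prod.remove[OF finite_atLeastAtMost])
          moreover have "(\<Prod>i\<in>{1..m} - {m}. normj \<sigma> p n (\<delta> i) ^ p ^ (i - 1)) = 1"
            by (rule prod.neutral) (simp add: ad normj_1[OF aut])
          ultimately show ?thesis by simp
        qed
        have dq: "(d' - 1) div int p = e * int (p ^ u)" using e S.p0 by (simp add: algebra_simps)
        define A where "A = normj \<sigma> p n \<alpha>"
        define B where "B = normj \<sigma> p n (\<delta> m)"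
        define y where "y = A powi e * B ^ (p ^ (m - 1 - u))"
        have pm: "p ^ (m - 1) = p ^ (m - 1 - u) * p ^ u" using um by (simp add: power_add[symmetric])
        have xy: "\<xi> = y ^ (p ^ u)"
        proof -
          have "\<xi> = A powi (e * int (p ^ u)) * B ^ (p ^ (m - 1))"
            using xe unfolding N2 P2 dq A_def B_def by simp
          also have "A powi (e * int (p ^ u)) = (A powi e) ^ (p ^ u)" by (simp only: power_int_mult power_int_of_nat)
          also have "B ^ (p ^ (m - 1)) = (B ^ (p ^ (m - 1 - u))) ^ (p ^ u)" by (simp only: pm power_mult)
          finally show ?thesis unfolding y_def by (simp only: power_mult_distrib)
        qed
        have y1: "y ^ (p ^ (u + 1)) = 1"
        proof -
          have "y ^ (p ^ (u + 1)) = (y ^ (p ^ u)) ^ p" by (simp add: power_mult[symmetric] mult.commute)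
          thus ?thesis using xy xip by simp
        qed
        have y2: "y ^ (p ^ (u + 1 - 1)) \<noteq> 1" using xy xi1 by simp
        have yF: "\<sigma> y = y" unfolding y_def A_def B_def using S.normj_fixed aut_basic[OF aut] by simp
        have "contains_mu (UNIV::'k set) p (u + 1)" using y1 y2 by (auto simp: contains_mu_def)
        hence "u + 1 \<le> G" using GG by blast
        hence uj: "u + 1 \<le> j" using um by (simp add: j_def)
        have u1: "u + 1 \<ge> 1" by simp
        have "p ^ (u + 1) dvd p ^ j" using uj by (rule le_imp_power_dvd)
        hence "y ^ (p ^ j) = 1" using prim_ord[OF prime u1 y1 y2, of "p ^ j"] by blast
        hence "\<sigma> y = y powi d" by (rule chi)
        hence "y powi d = y powi 1" using yF by simp
        hence "int p ^ (u + 1) dvd d - 1" using prim_eq_int[OF prime u1 y1 y2, of d 1] by simp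
        thus False using nd by simp
      qed
      thus ?thesis using True by (simp add: np_le_def)
    qed
  qed
qed


end
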